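(* Let $C$ be the Cantor set, $\mathcal{H}$ the algebra of its clopen subsets, $\mathcal{K}$ the family of its compact subsets, and let $\psi_{\mathcal{H}}\colon\mathcal{H}\to\mathbb{R}$ be an increasing submodular setfunction with $\psi_{\mathcal{H}}(\emptyset)=0$. Define $\psi_{\mathcal{K}}\colon\mathcal{K}\to\mathbb{R}$ by $\psi_{\mathcal{K}}(K)=\inf\{\psi_{\mathcal{H}}(H)\colon H\in\mathcal{H},\ K\subseteq H\}$. Then $\psi_{\mathcal{K}}$ is increasing, submodular and continuous from the right.
   Context: A setfunction $\varphi$ on a family $\mathcal{F}$ of sets closed under finite union and intersection is increasing if $X\subseteq Y$ implies $\varphi(X)\le\varphi(Y)$, and submodular if $\varphi(X)+\varphi(Y)\ge\varphi(X\cap Y)+\varphi(X\cup Y)$ for all $X,Y\in\mathcal{F}$. An increasing setfunction $\varphi$ on the compact subsets of a topological space is continuous from the right if for every $\varepsilon>0$ and every compact $K$ there is an open set $U\supseteq K$ such that $\varphi(K')<\varphi(K)+\varepsilon$ for every compact $K'\subseteq U$. *)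

theory Defs
  imports "HOL-Analysis.Analysis"
begin

fun cantor_stage :: "nat \<Rightarrow> real set" where
  "cantor_stage 0 = {0..1}"
| "cantor_stage (Suc n) =
     (\<lambda>x. x / 3) ` cantor_stage n \<union> (\<lambda>x. x / 3 + 2 / 3) ` cantor_stage n"

definition cantor_set :: "real set" where
  "cantor_set = (\<Inter>n. cantor_stage n)"

definition cantor_clopens :: "real set set" where
  "cantor_clopens = {H. openin (top_of_set cantor_set) H \<and> closedin (top_of_set cantor_set) H}"

definition cantor_compacts :: "real set set" where
  "cantor_compacts = {K. compactin (top_of_set cantor_set) K}"

definition increasing_setfun :: "'a set set \<Rightarrow> ('a set \<Rightarrow> real) \<Rightarrow> bool" where
  "increasing_setfun F \<phi> \<longleftrightarrow> (\<forall>X\<in>F. \<forall>Y\<in>F. X \<subseteq> Y \<longrightarrow> \<phi> X \<le> \<phi> Y)"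

definition submodular_setfun :: "'a set set \<Rightarrow> ('a set \<Rightarrow> real) \<Rightarrow> bool" where
  "submodular_setfun F \<phi> \<longleftrightarrow>
     (\<forall>X\<in>F. \<forall>Y\<in>F. \<phi> X + \<phi> Y \<ge> \<phi> (X \<inter> Y) + \<phi> (X \<union> Y))"

definition continuous_from_right :: "'a topology \<Rightarrow> ('a set \<Rightarrow> real) \<Rightarrow> bool" where
  "continuous_from_right T \<phi> \<longleftrightarrow>
     (\<forall>\<epsilon>>0. \<forall>K. compactin T K \<longrightarrow>
        (\<exists>U. openin T U \<and> K \<subseteq> U \<and>
             (\<forall>K'. compactin T K' \<and> K' \<subseteq> U \<longrightarrow> \<phi> K' < \<phi> K + \<epsilon>)))"

end

theory Submission
  imports Defs
begin

lemma clopen_Int: "A \<in> cantor_clopens \<Longrightarrow> B \<in> cantor_clopens \<Longrightarrow> A \<inter> B \<in> cantor_clopens"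
  unfolding cantor_clopens_def by (auto intro: openin_Int closedin_Int)

lemma clopen_Un: "A \<in> cantor_clopens \<Longrightarrow> B \<in> cantor_clopens \<Longrightarrow> A \<union> B \<in> cantor_clopens"
  unfolding cantor_clopens_def by (auto intro: openin_Un closedin_Un)

lemma clopen_top: "cantor_set \<in> cantor_clopens"
  unfolding cantor_clopens_def using openin_topspace[of "top_of_set cantor_set"]
    closedin_topspace[of "top_of_set cantor_set"] by simp

lemma clopen_empty: "{} \<in> cantor_clopens"
  unfolding cantor_clopens_def by simp

lemma compact_sub: "compactin (top_of_set cantor_set) K \<Longrightarrow> K \<subseteq> cantor_set"
  using compactin_subset_topspace by fastforce

theorem lemma3p6:
  fixes \<psi>H :: "real set \<Rightarrow> real" and \<psi>K :: "real set \<Rightarrow> real"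
  assumes "increasing_setfun cantor_clopens \<psi>H"
    and "submodular_setfun cantor_clopens \<psi>H"
    and "\<psi>H {} = 0"
    and "\<And>K. \<psi>K K = Inf {\<psi>H H | H. H \<in> cantor_clopens \<and> K \<subseteq> H}"
  shows "increasing_setfun cantor_compacts \<psi>K
       \<and> submodular_setfun cantor_compacts \<psi>K
       \<and> continuous_from_right (top_of_set cantor_set) \<psi>K"
proof -
  define S where "S K = {\<psi>H H | H. H \<in> cantor_clopens \<and> K \<subseteq> H}" for K
  have ne: "S K \<noteq> {}" if "K \<subseteq> cantor_set" for K
    using that clopen_top unfolding S_def by blast
  have bdd: "bdd_below (S K)" for K
  proof -
    have "0 \<le> \<psi>H H" if "H \<in> cantor_clopens" for H
      using assms(1,3) that clopen_empty unfolding increasing_setfun_def by force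
    then show ?thesis unfolding S_def bdd_below_def by blast
  qed
  have low: "\<psi>K K \<le> \<psi>H H" if "H \<in> cantor_clopens" "K \<subseteq> H" for K H
    unfolding assms(4) by (rule cInf_lower) (use that bdd[unfolded S_def] in auto)
  have appr: "\<exists>H. H \<in> cantor_clopens \<and> K \<subseteq> H \<and> \<psi>H H < \<psi>K K + e"
    if Ks: "K \<subseteq> cantor_set" and ep: "e > 0" for K e
  proof -
    have "Inf (S K) < \<psi>K K + e" using ep assms(4) S_def by simp
    then obtain x where "x \<in> S K" "x < \<psi>K K + e"
      using cInf_lessD[OF ne[OF Ks]] by blast
    then show ?thesis unfolding S_def by blast
  qed
  have mono: "\<psi>K K \<le> \<psi>K K'" if "K \<subseteq> K'" "K' \<subseteq> cantor_set" for K K'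
  proof -
    have "Inf (S K) \<le> Inf (S K')"
      by (rule cInf_superset_mono[OF ne[OF that(2)] bdd]) (use that in \<open>auto simp: S_def\<close>)
    then show ?thesis using assms(4) S_def by simp
  qed
  have sub: "\<psi>K (K1 \<inter> K2) + \<psi>K (K1 \<union> K2) \<le> \<psi>K K1 + \<psi>K K2"
    if k1: "K1 \<subseteq> cantor_set" and k2: "K2 \<subseteq> cantor_set" for K1 K2
  proof (rule field_le_epsilon)
    fix e :: real assume e: "e > 0"
    obtain H1 where H1: "H1 \<in> cantor_clopens" "K1 \<subseteq> H1" "\<psi>H H1 < \<psi>K K1 + e/2"
      using appr[OF k1, of "e/2"] e by auto
    obtain H2 where H2: "H2 \<in> cantor_clopens" "K2 \<subseteq> H2" "\<psi>H H2 < \<psi>K K2 + e/2"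
      using appr[OF k2, of "e/2"] e by auto
    have "\<psi>K (K1 \<inter> K2) \<le> \<psi>H (H1 \<inter> H2)"
      using low[OF clopen_Int[OF H1(1) H2(1)]] H1 H2 by blast
    moreover have "\<psi>K (K1 \<union> K2) \<le> \<psi>H (H1 \<union> H2)"
      using low[OF clopen_Un[OF H1(1) H2(1)]] H1 H2 by blast
    moreover have "\<psi>H (H1 \<inter> H2) + \<psi>H (H1 \<union> H2) \<le> \<psi>H H1 + \<psi>H H2"
      using assms(2) H1(1) H2(1) unfolding submodular_setfun_def by blast
    ultimately show "\<psi>K (K1 \<inter> K2) + \<psi>K (K1 \<union> K2) \<le> \<psi>K K1 + \<psi>K K2 + e"
      using H1(3) H2(3) by linarith
  qed
  have c1: "increasing_setfun cantor_compacts \<psi>K"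
    unfolding increasing_setfun_def cantor_compacts_def
  proof (intro ballI impI)
    fix X Y assume "X \<in> {K. compactin (top_of_set cantor_set) K}" "Y \<in> {K. compactin (top_of_set cantor_set) K}" "X \<subseteq> Y"
    then show "\<psi>K X \<le> \<psi>K Y"
      using mono[of X Y] compact_sub[of Y] by simp
  qed
  have c2: "submodular_setfun cantor_compacts \<psi>K"
    unfolding submodular_setfun_def cantor_compacts_def
  proof (intro ballI)
    fix X Y assume "X \<in> {K. compactin (top_of_set cantor_set) K}" "Y \<in> {K. compactin (top_of_set cantor_set) K}"
    then show "\<psi>K (X \<inter> Y) + \<psi>K (X \<union> Y) \<le> \<psi>K X + \<psi>K Y"
      using sub compact_sub by simp
  qed
  have c3: "continuous_from_right (top_of_set cantor_set) \<psi>K"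
    unfolding continuous_from_right_def
  proof (intro allI impI)
    fix e :: real and K assume e: "e > 0" and K: "compactin (top_of_set cantor_set) K"
    obtain H where H: "H \<in> cantor_clopens" "K \<subseteq> H" "\<psi>H H < \<psi>K K + e"
      using appr[OF compact_sub[OF K] e] by blast
    show "\<exists>U. openin (top_of_set cantor_set) U \<and> K \<subseteq> U \<and>
             (\<forall>K'. compactin (top_of_set cantor_set) K' \<and> K' \<subseteq> U \<longrightarrow> \<psi>K K' < \<psi>K K + e)"
    proof (intro exI conjI allI impI)
      show "openin (top_of_set cantor_set) H" using H(1) cantor_clopens_def by blast
      show "K \<subseteq> H" by fact
      fix K' assume "compactin (top_of_set cantor_set) K' \<and> K' \<subseteq> H"
      then have "\<psi>K K' \<le> \<psi>H H" using low[OF H(1), of K'] by simp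
      then show "\<psi>K K' < \<psi>K K + e" using H(3) by linarith
    qed
  qed
  show ?thesis using c1 c2 c3 by blast
qed

end
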